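(* Let $0<k<n$ and let $\mu=\delta_n\cdots\delta_{k+1}:[k]\to[n]$ be the face operator $i\mapsto i$. Let $X$ be the pushout of $\Delta[0]\leftarrow\Delta[k]\xrightarrow{\mu}\Delta[n]$, i.e. $\Delta[n]$ with the face spanned by the vertices $0,\dots,k$ collapsed to a point. Then $DX\cong\Delta[n-k]$; more precisely, the map $X\to\Delta[n-k]$ induced by the order-preserving surjection $[n]\to[n-k]$ sending $0,\dots,k$ to $0$ and $i$ to $i-k$ for $i>k$ is, up to isomorphism, $\eta_X$.
   Context: $\delta_j:[n-1]\to[n]$ is the elementary face operator omitting $j$. A simplicial set is non-singular if every non-degenerate simplex has degreewise injective representing map. The desingularization $DX$ is the image of $X\to\prod_f Y$, $x\mapsto(f(x))_f$, over all quotient maps $f:X\to Y$ (maps $X\to X/R$ for operator-compatible families of equivalence relations) with $Y$ non-singular; $\eta_X:X\to DX$ is the corestriction. *)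

theory Defs
  imports Main
begin

text \<open>Order-preserving operators \<alpha> : [m] \<rightarrow> [n] are encoded as their value lists
  [\<alpha> 0, ..., \<alpha> m]: sorted lists of length m+1 with entries \<le> n.
  Composition \<beta> \<circ> \<alpha> is encoded as map (nth \<beta>) \<alpha>.\<close>

definition ordop :: "nat \<Rightarrow> nat \<Rightarrow> nat list \<Rightarrow> bool" where
  "ordop m n \<alpha> \<longleftrightarrow> length \<alpha> = Suc m \<and> sorted \<alpha> \<and> (\<forall>i\<in>set \<alpha>. i \<le> n)"

text \<open>A simplicial set: sx X n is the set of n-simplices; sop X n \<alpha> x is X(\<alpha>) x
  for x an n-simplex and \<alpha> : [m] \<rightarrow> [n].\<close>

record 'a sset =
  sx  :: "nat \<Rightarrow> 'a set"
  sop :: "nat \<Rightarrow> nat list \<Rightarrow> 'a \<Rightarrow> 'a"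

definition is_sset :: "'a sset \<Rightarrow> bool" where
  "is_sset X \<longleftrightarrow>
     (\<forall>m n \<alpha> x. ordop m n \<alpha> \<and> x \<in> sx X n \<longrightarrow> sop X n \<alpha> x \<in> sx X m) \<and>
     (\<forall>n x. x \<in> sx X n \<longrightarrow> sop X n [0..<Suc n] x = x) \<and>
     (\<forall>l m n \<alpha> \<beta> x. ordop l m \<alpha> \<and> ordop m n \<beta> \<and> x \<in> sx X n \<longrightarrow>
         sop X m \<alpha> (sop X n \<beta> x) = sop X n (map (nth \<beta>) \<alpha>) x)"

definition sset_map :: "'a sset \<Rightarrow> 'b sset \<Rightarrow> (nat \<Rightarrow> 'a \<Rightarrow> 'b) \<Rightarrow> bool" where
  "sset_map X Y f \<longleftrightarrow>
     (\<forall>n x. x \<in> sx X n \<longrightarrow> f n x \<in> sx Y n) \<and>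
     (\<forall>m n \<alpha> x. ordop m n \<alpha> \<and> x \<in> sx X n \<longrightarrow> f m (sop X n \<alpha> x) = sop Y n \<alpha> (f n x))"

definition sset_iso :: "'a sset \<Rightarrow> 'b sset \<Rightarrow> (nat \<Rightarrow> 'a \<Rightarrow> 'b) \<Rightarrow> bool" where
  "sset_iso X Y f \<longleftrightarrow> sset_map X Y f \<and> (\<forall>n. bij_betw (f n) (sx X n) (sx Y n))"

definition stdsimp :: "nat \<Rightarrow> nat list sset" where
  "stdsimp n = \<lparr> sx = (\<lambda>m. {\<alpha>. ordop m n \<alpha>}), sop = (\<lambda>p \<alpha> \<beta>. map (nth \<beta>) \<alpha>) \<rparr>"

text \<open>Degenerate simplices: images under a degeneracy operator (surjection [n] \<rightarrow> [m], m < n).\<close>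

definition degenerate :: "'a sset \<Rightarrow> nat \<Rightarrow> 'a \<Rightarrow> bool" where
  "degenerate X n x \<longleftrightarrow>
     (\<exists>m \<sigma> y. m < n \<and> ordop n m \<sigma> \<and> set \<sigma> = {0..m} \<and> y \<in> sx X m \<and> x = sop X m \<sigma> y)"

definition nonsingular :: "'a sset \<Rightarrow> bool" where
  "nonsingular X \<longleftrightarrow>
     (\<forall>n x. x \<in> sx X n \<and> \<not> degenerate X n x \<longrightarrow>
        (\<forall>m. inj_on (\<lambda>\<alpha>. sop X n \<alpha> x) {\<alpha>. ordop m n \<alpha>}))"

definition compat_rel :: "'a sset \<Rightarrow> (nat \<Rightarrow> ('a \<times> 'a) set) \<Rightarrow> bool" where
  "compat_rel X R \<longleftrightarrow>
     (\<forall>n. equiv (sx X n) (R n)) \<and>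
     (\<forall>m n \<alpha> x y. ordop m n \<alpha> \<and> (x, y) \<in> R n \<longrightarrow> (sop X n \<alpha> x, sop X n \<alpha> y) \<in> R m)"

definition quot :: "'a sset \<Rightarrow> (nat \<Rightarrow> ('a \<times> 'a) set) \<Rightarrow> 'a set sset" where
  "quot X R = \<lparr> sx = (\<lambda>n. sx X n // R n),
                sop = (\<lambda>n \<alpha> C. R (length \<alpha> - 1) `` {sop X n \<alpha> (SOME x. x \<in> C)}) \<rparr>"

text \<open>Index set of the product: quotient maps X \<rightarrow> X/R with X/R non-singular.\<close>

definition admissible :: "'a sset \<Rightarrow> (nat \<Rightarrow> ('a \<times> 'a) set) \<Rightarrow> bool" where
  "admissible X R \<longleftrightarrow> compat_rel X R \<and> nonsingular (quot X R)"

text \<open>The map X \<rightarrow> \<Prod>_R X/R, x \<mapsto> (f_R(x))_R (components off the index set are {}).\<close>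

definition eta :: "'a sset \<Rightarrow> nat \<Rightarrow> 'a \<Rightarrow> ((nat \<Rightarrow> ('a \<times> 'a) set) \<Rightarrow> 'a set)" where
  "eta X n x = (\<lambda>R. if admissible X R then R n `` {x} else {})"

text \<open>DX: the image of X in the product, with componentwise simplicial operators.\<close>

definition desing :: "'a sset \<Rightarrow> ((nat \<Rightarrow> ('a \<times> 'a) set) \<Rightarrow> 'a set) sset" where
  "desing X = \<lparr> sx = (\<lambda>n. eta X n ` sx X n),
                sop = (\<lambda>n \<alpha> z. (\<lambda>R. if admissible X R
                          then R (length \<alpha> - 1) `` {sop X n \<alpha> (SOME x. x \<in> z R)} else {})) \<rparr>"

definition mu_face :: "nat \<Rightarrow> nat list" where
  "mu_face k = [0..<Suc k]"

text \<open>The pushout of \<Delta>[0] \<leftarrow> \<Delta>[k] \<rightarrow> \<Delta>[n] (along \<mu>), modelled as the quotient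
  of \<Delta>[n] identifying all simplices in the image of \<mu>.\<close>

definition collapse_rel :: "nat \<Rightarrow> nat \<Rightarrow> nat \<Rightarrow> (nat list \<times> nat list) set" where
  "collapse_rel n k m = {(\<alpha>, \<beta>). ordop m n \<alpha> \<and> ordop m n \<beta> \<and>
      (\<alpha> = \<beta> \<or> ((\<exists>\<gamma>. ordop m k \<gamma> \<and> \<alpha> = map (nth (mu_face k)) \<gamma>) \<and>
                  (\<exists>\<gamma>. ordop m k \<gamma> \<and> \<beta> = map (nth (mu_face k)) \<gamma>)))}"

definition collapse :: "nat \<Rightarrow> nat \<Rightarrow> nat list set sset" where
  "collapse n k = quot (stdsimp n) (collapse_rel n k)"

text \<open>The map X \<rightarrow> \<Delta>[n-k] induced by s : [n] \<rightarrow> [n-k], s i = i - k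
  (so 0..k \<mapsto> 0 and i \<mapsto> i - k for i > k).\<close>

definition collapse_map :: "nat \<Rightarrow> nat \<Rightarrow> nat list set \<Rightarrow> nat list" where
  "collapse_map k m C = map (\<lambda>i. i - k) (SOME \<alpha>. \<alpha> \<in> C)"

end

theory Submission
  imports Defs
begin


lemma sset_closed: "is_sset X \<Longrightarrow> ordop m n \<alpha> \<Longrightarrow> x \<in> sx X n \<Longrightarrow> sop X n \<alpha> x \<in> sx X m"
  unfolding is_sset_def by blast
lemma sset_id: "is_sset X \<Longrightarrow> x \<in> sx X n \<Longrightarrow> sop X n [0..<Suc n] x = x"
  unfolding is_sset_def by blast
lemma sset_comp: "is_sset X \<Longrightarrow> ordop l m \<alpha> \<Longrightarrow> ordop m n \<beta> \<Longrightarrow> x \<in> sx X n \<Longrightarrow>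
   sop X m \<alpha> (sop X n \<beta> x) = sop X n (map (nth \<beta>) \<alpha>) x"
  unfolding is_sset_def by blast

lemma ordop_len: "ordop m n \<alpha> \<Longrightarrow> length \<alpha> = Suc m" by (simp add: ordop_def)

lemma ordop_comp:
  assumes a: "ordop l m \<alpha>" and b: "ordop m n \<beta>"
  shows "ordop l n (map (nth \<beta>) \<alpha>)"
proof -
  have lb: "length \<beta> = Suc m" and la: "length \<alpha> = Suc l" using a b by (auto simp: ordop_def)
  have ia: "\<forall>i\<in>set \<alpha>. i < length \<beta>" using a lb by (auto simp: ordop_def)
  have "sorted (map (nth \<beta>) \<alpha>)"
    unfolding sorted_iff_nth_mono
  proof (intro allI impI)
    fix i j assume ij: "i \<le> j" "j < length (map ((!) \<beta>) \<alpha>)"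
    have "\<alpha> ! i \<le> \<alpha> ! j" using a ij by (auto simp: ordop_def sorted_iff_nth_mono)
    moreover have "\<alpha> ! j < length \<beta>" using ia ij by auto
    ultimately show "map ((!) \<beta>) \<alpha> ! i \<le> map ((!) \<beta>) \<alpha> ! j"
      using b ij by (auto simp: ordop_def sorted_nth_mono)
  qed
  moreover have "\<forall>i\<in>set (map (nth \<beta>) \<alpha>). i \<le> n"
    using ia b by (auto simp: ordop_def)
  ultimately show ?thesis using la by (simp add: ordop_def)
qed

lemma ordop_id: "ordop n n [0..<Suc n]" by (auto simp: ordop_def simp del: upt_Suc)

lemma map_nth_comp:
  assumes "\<forall>i\<in>set \<alpha>. i < length \<beta>"
  shows "map (nth (map (nth x) \<beta>)) \<alpha> = map (nth x) (map (nth \<beta>) \<alpha>)"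
  using assms by (auto simp: nth_map)

lemma ordop_lt: "ordop l m \<alpha> \<Longrightarrow> ordop m n \<beta> \<Longrightarrow> \<forall>i\<in>set \<alpha>. i < length \<beta>"
  by (auto simp: ordop_def)

lemma is_sset_std: "is_sset (stdsimp n)"
  unfolding is_sset_def stdsimp_def
  apply (auto simp: ordop_comp simp del: upt_Suc)
   apply (metis map_nth ordop_len)
  apply (simp add: map_nth_comp ordop_lt)
  done

lemma quot_class_sop:
  assumes R: "compat_rel X R" and a: "ordop m n \<alpha>" and x: "x \<in> sx X n"
  shows "sop (quot X R) n \<alpha> (R n `` {x}) = R m `` {sop X n \<alpha> x}"
proof -
  have eq: "equiv (sx X n) (R n)" using R by (simp add: compat_rel_def)
  have eqm: "equiv (sx X m) (R m)" using R by (simp add: compat_rel_def)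
  have "x \<in> R n `` {x}" using eq x by (rule equiv_class_self)
  hence "(SOME y. y \<in> R n `` {x}) \<in> R n `` {x}" by (rule someI)
  hence "(x, SOME y. y \<in> R n `` {x}) \<in> R n" by simp
  hence "(sop X n \<alpha> x, sop X n \<alpha> (SOME y. y \<in> R n `` {x})) \<in> R m" using R a by (auto simp: compat_rel_def)
  hence "R m `` {sop X n \<alpha> (SOME y. y \<in> R n `` {x})} = R m `` {sop X n \<alpha> x}"
    using eqm by (metis equiv_class_eq)
  moreover have "length \<alpha> - 1 = m" using a by (simp add: ordop_def)
  ultimately show ?thesis by (simp add: quot_def)
qed

lemma quot_sx: "sx (quot X R) n = sx X n // R n" by (simp add: quot_def)

lemma quot_sset:
  assumes X: "is_sset X" and R: "compat_rel X R"
  shows "is_sset (quot X R)"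
  unfolding is_sset_def
proof (intro conjI allI impI)
  fix m n \<alpha> C assume h: "ordop m n \<alpha> \<and> C \<in> sx (quot X R) n"
  then obtain x where x: "x \<in> sx X n" "C = R n `` {x}" by (auto simp: quot_sx elim: quotientE)
  have "sop X n \<alpha> x \<in> sx X m" using X h x by (auto simp: is_sset_def)
  thus "sop (quot X R) n \<alpha> C \<in> sx (quot X R) m"
    using quot_class_sop[OF R] h x by (simp add: quot_sx quotientI)
next
  fix n C assume h: "C \<in> sx (quot X R) n"
  then obtain x where x: "x \<in> sx X n" "C = R n `` {x}" by (auto simp: quot_sx elim: quotientE)
  show "sop (quot X R) n [0..<Suc n] C = C"
    using quot_class_sop[OF R ordop_id x(1)] X x by (simp add: is_sset_def)
next
  fix l m n \<alpha> \<beta> C assume h: "ordop l m \<alpha> \<and> ordop m n \<beta> \<and> C \<in> sx (quot X R) n"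
  then obtain x where x: "x \<in> sx X n" "C = R n `` {x}" by (auto simp: quot_sx elim: quotientE)
  have sx: "sop X n \<beta> x \<in> sx X m" using X h x by (auto simp: is_sset_def)
  show "sop (quot X R) m \<alpha> (sop (quot X R) n \<beta> C) = sop (quot X R) n (map ((!) \<beta>) \<alpha>) C"
  proof -
    have "sop (quot X R) n \<beta> C = R m `` {sop X n \<beta> x}" using quot_class_sop[OF R _ x(1)] h x by simp
    moreover have "sop (quot X R) m \<alpha> (R m `` {sop X n \<beta> x}) = R l `` {sop X m \<alpha> (sop X n \<beta> x)}"
      using quot_class_sop[OF R _ sx] h by simp
    moreover have "sop X m \<alpha> (sop X n \<beta> x) = sop X n (map ((!) \<beta>) \<alpha>) x" using h by (intro sset_comp[OF X _ _ x(1)]) auto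
    moreover have "sop (quot X R) n (map ((!) \<beta>) \<alpha>) C = R l `` {sop X n (map ((!) \<beta>) \<alpha>) x}"
      using quot_class_sop[OF R ordop_comp[of l m \<alpha> n \<beta>] x(1)] h x by simp
    ultimately show ?thesis by simp
  qed
qed

lemma quot_map:
  assumes X: "is_sset X" and R: "compat_rel X R"
  shows "sset_map X (quot X R) (\<lambda>n x. R n `` {x})"
  unfolding sset_map_def
  using quot_class_sop[OF R] by (auto simp: quot_sx quotientI)




lemma mu_map: "ordop m k \<gamma> \<Longrightarrow> map (nth (mu_face k)) \<gamma> = \<gamma>"
  by (auto simp: mu_face_def ordop_def intro!: map_idI simp del: upt_Suc)

lemma collapse_rel_iff:
  "(\<alpha>,\<beta>) \<in> collapse_rel n k m \<longleftrightarrow> ordop m n \<alpha> \<and> ordop m n \<beta> \<and> (\<alpha> = \<beta> \<or> (ordop m k \<alpha> \<and> ordop m k \<beta>))"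
  unfolding collapse_rel_def by (auto simp: mu_map)

lemma compat_std: "compat_rel (stdsimp n) (collapse_rel n k)"
  unfolding compat_rel_def
proof (intro conjI allI impI)
  fix m show "equiv (sx (stdsimp n) m) (collapse_rel n k m)"
    unfolding equiv_def refl_on_def sym_def trans_def
    by (auto simp: collapse_rel_iff stdsimp_def)
next
  fix m n' \<alpha> x y assume h: "ordop m n' \<alpha> \<and> (x, y) \<in> collapse_rel n k n'"
  thus "(sop (stdsimp n) n' \<alpha> x, sop (stdsimp n) n' \<alpha> y) \<in> collapse_rel n k m"
    by (auto simp: collapse_rel_iff stdsimp_def ordop_comp)
qed

lemma X_sset: "is_sset (collapse n k)"
  unfolding collapse_def by (rule quot_sset[OF is_sset_std compat_std])

lemma q_map: "sset_map (stdsimp n) (collapse n k) (\<lambda>m \<beta>. collapse_rel n k m `` {\<beta>})"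
  unfolding collapse_def by (rule quot_map[OF is_sset_std compat_std])

lemma X_sx: "sx (collapse n k) m = {\<beta>. ordop m n \<beta>} // collapse_rel n k m"
  by (simp add: collapse_def quot_def stdsimp_def)

lemma X_elem: "x \<in> sx (collapse n k) m \<Longrightarrow> \<exists>\<beta>. ordop m n \<beta> \<and> x = collapse_rel n k m `` {\<beta>}"
  by (auto simp: X_sx elim!: quotientE)

lemma X_elemI: "ordop m n \<beta> \<Longrightarrow> collapse_rel n k m `` {\<beta>} \<in> sx (collapse n k) m"
  by (auto simp: X_sx intro!: quotientI)

lemma map_sub_rep: "\<forall>i\<in>set xs. i \<le> k \<Longrightarrow> map (\<lambda>i. i - (k::nat)) xs = replicate (length xs) 0"
  by (induct xs) auto

lemma cm_q: assumes "ordop m n \<beta>"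
  shows "collapse_map k m (collapse_rel n k m `` {\<beta>}) = map (\<lambda>i. i - k) \<beta>"
proof -
  have "\<beta> \<in> collapse_rel n k m `` {\<beta>}" using assms by (simp add: collapse_rel_iff)
  hence "(SOME \<gamma>. \<gamma> \<in> collapse_rel n k m `` {\<beta>}) \<in> collapse_rel n k m `` {\<beta>}" by (rule someI)
  then obtain \<gamma> where g: "\<gamma> = (SOME \<gamma>. \<gamma> \<in> collapse_rel n k m `` {\<beta>})" "(\<beta>, \<gamma>) \<in> collapse_rel n k m" by auto
  have "map (\<lambda>i. i - k) \<gamma> = map (\<lambda>i. i - k) \<beta>"
    using g(2) unfolding collapse_rel_iff
    by (metis map_sub_rep ordop_def)
  thus ?thesis using g(1) by (simp add: collapse_map_def)
qed

lemma sk_comp: "\<forall>i\<in>set \<alpha>. i < length \<beta> \<Longrightarrow>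
  map (\<lambda>i. i - k) (map (nth \<beta>) \<alpha>) = map (nth (map (\<lambda>i. i - (k::nat)) \<beta>)) \<alpha>"
  by auto

lemma X_sop_q: "ordop m n' \<alpha> \<Longrightarrow> ordop n' n \<beta> \<Longrightarrow>
   sop (collapse n k) n' \<alpha> (collapse_rel n k n' `` {\<beta>}) = collapse_rel n k m `` {map (nth \<beta>) \<alpha>}"
  using quot_class_sop[OF compat_std, of m n' \<alpha> \<beta> n k]
  by (simp add: collapse_def stdsimp_def)

lemma cm_sop: assumes x: "x \<in> sx (collapse n k) n'" and a: "ordop m n' \<alpha>"
  shows "collapse_map k m (sop (collapse n k) n' \<alpha> x) = map (nth (collapse_map k n' x)) \<alpha>"
proof -
  obtain \<beta> where b: "ordop n' n \<beta>" "x = collapse_rel n k n' `` {\<beta>}" using X_elem[OF x] by blast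
  show ?thesis using b a X_sop_q[OF a b(1)] cm_q[OF b(1)] cm_q[OF ordop_comp[OF a b(1)]]
    by (simp add: ordop_lt)
qed

lemma sk_ordop: "ordop m n \<beta> \<Longrightarrow> ordop m (n - k) (map (\<lambda>i. i - k) \<beta>)"
  unfolding ordop_def by (auto simp: sorted_iff_nth_mono diff_le_mono)

lemma cm_ordop: "x \<in> sx (collapse n k) m \<Longrightarrow> ordop m (n - k) (collapse_map k m x)"
  using X_elem cm_q sk_ordop by metis

lemma cm_surj: assumes "k \<le> n" "ordop m (n - k) \<delta>"
  shows "\<exists>x\<in>sx (collapse n k) m. collapse_map k m x = \<delta>"
proof -
  have o: "ordop m n (map (\<lambda>i. i + k) \<delta>)" using assms
    unfolding ordop_def by (auto simp: sorted_iff_nth_mono)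
  have "map (\<lambda>i. i - k) (map (\<lambda>i. i + k) \<delta>) = \<delta>" by (induct \<delta>) auto
  thus ?thesis using X_elemI[OF o] cm_q[OF o] by metis
qed




lemma sorted_nondistinct:
  assumes s: "sorted \<delta>" and d: "\<not> distinct \<delta>"
  shows "\<exists>i. Suc i < length \<delta> \<and> \<delta>!i = \<delta>!Suc i"
proof -
  obtain i j where ij: "i < j" "j < length \<delta>" "\<delta>!i = \<delta>!j"
    using d unfolding distinct_conv_nth by (metis linorder_neqE_nat)
  have "\<delta>!i \<le> \<delta>!Suc i" "\<delta>!Suc i \<le> \<delta>!j" using s ij sorted_nth_mono[of \<delta> i "Suc i"] sorted_nth_mono[of \<delta> "Suc i" j] by (simp_all del: sorted_nth_mono)
  thus ?thesis using ij by (intro exI[of _ i]) auto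
qed

lemma nondistinct_degenerate:
  assumes o: "ordop p N \<delta>" and d: "\<not> distinct \<delta>"
  shows "degenerate (stdsimp N) p \<delta>"
proof -
  have ld: "length \<delta> = Suc p" using o by (simp add: ordop_def)
  obtain i where i: "Suc i < Suc p" "\<delta>!i = \<delta>!Suc i"
    using sorted_nondistinct[of \<delta>] o d ld by (auto simp: ordop_def)
  define q where "q = p - 1"
  have pq: "p = Suc q" using i q_def by simp
  define \<sigma> where "\<sigma> = map (\<lambda>j. if j \<le> i then j else j - 1) [0..<Suc p]"
  define \<tau> where "\<tau> = map (\<lambda>j. if j \<le> i then j else Suc j) [0..<p]"
  have sn: "j < Suc p \<Longrightarrow> \<sigma>!j = (if j \<le> i then j else j - 1)" for j
    unfolding \<sigma>_def by (simp del: upt_Suc)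
  have tn: "j < p \<Longrightarrow> \<tau>!j = (if j \<le> i then j else Suc j)" for j
    unfolding \<tau>_def by simp
  have ls: "length \<sigma> = Suc p" by (simp add: \<sigma>_def del: upt_Suc)
  have lt: "length \<tau> = p" by (simp add: \<tau>_def)
  have os: "ordop p q \<sigma>"
    unfolding ordop_def
  proof (intro conjI)
    show "sorted \<sigma>" unfolding sorted_iff_nth_mono using ls sn by auto
    show "\<forall>x\<in>set \<sigma>. x \<le> q" using i unfolding \<sigma>_def q_def by (auto simp del: upt_Suc)
  qed (simp add: ls)
  have ss: "set \<sigma> = {0..q}"
  proof
    show "set \<sigma> \<subseteq> {0..q}" using os by (auto simp: ordop_def)
    show "{0..q} \<subseteq> set \<sigma>"
    proof
      fix y assume y: "y \<in> {0..q}"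
      show "y \<in> set \<sigma>"
      proof (cases "y \<le> i")
        case True thus ?thesis using y sn[of y] ls pq by (metis atLeastAtMost_iff le_imp_less_Suc nth_mem less_Suc_eq)
      next
        case False
        hence "\<sigma>!(Suc y) = y" using y sn[of "Suc y"] pq by auto
        thus ?thesis using y ls pq by (metis atLeastAtMost_iff Suc_le_mono le_imp_less_Suc nth_mem)
      qed
    qed
  qed
  have ot: "ordop q p \<tau>"
    unfolding ordop_def
  proof (intro conjI)
    show "sorted \<tau>" unfolding sorted_iff_nth_mono using lt tn by auto
    show "\<forall>x\<in>set \<tau>. x \<le> p" unfolding \<tau>_def by auto
  qed (simp add: lt pq)
  define y where "y = map (nth \<delta>) \<tau>"
  have oy: "ordop q N y" unfolding y_def using ordop_comp[OF ot o] .
  have "map (nth y) \<sigma> = \<delta>"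
  proof (rule nth_equalityI)
    show "length (map ((!) y) \<sigma>) = length \<delta>" using ls ld by simp
    fix j assume j: "j < length (map ((!) y) \<sigma>)"
    hence j': "j < Suc p" using ls by simp
    have "\<sigma>!j < p" using sn[OF j'] i j' by auto
    hence "map ((!) y) \<sigma> ! j = \<delta> ! (\<tau> ! (\<sigma> ! j))" using j lt by (simp add: y_def)
    also have "\<dots> = \<delta> ! j"
    proof (cases "j \<le> i")
      case True thus ?thesis using sn[OF j'] tn i by auto
    next
      case False
      show ?thesis
      proof (cases "j = Suc i")
        case True thus ?thesis using sn[OF j'] tn i by auto
      next
        case False2: False
        thus ?thesis using False sn[OF j'] tn[of "j - 1"] j' by auto
      qed
    qed
    finally show "map ((!) y) \<sigma> ! j = \<delta> ! j" .
  qed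
  thus ?thesis unfolding degenerate_def
    using os ss oy pq by (intro exI[of _ q] exI[of _ \<sigma>] exI[of _ y]) (auto simp: stdsimp_def)
qed




definition Kr :: "nat \<Rightarrow> nat \<Rightarrow> nat \<Rightarrow> (nat list set \<times> nat list set) set" where
  "Kr n k m = {(x,y). x \<in> sx (collapse n k) m \<and> y \<in> sx (collapse n k) m \<and> collapse_map k m x = collapse_map k m y}"

lemma compat_K: "compat_rel (collapse n k) (Kr n k)"
  unfolding compat_rel_def
proof (intro conjI allI impI)
  fix m show "equiv (sx (collapse n k) m) (Kr n k m)"
    unfolding equiv_def refl_on_def sym_def trans_def Kr_def by auto
next
  fix m n' \<alpha> x y assume h: "ordop m n' \<alpha> \<and> (x, y) \<in> Kr n k n'"
  thus "(sop (collapse n k) n' \<alpha> x, sop (collapse n k) n' \<alpha> y) \<in> Kr n k m"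
    unfolding Kr_def using cm_sop[of x n k n' m \<alpha>] cm_sop[of y n k n' m \<alpha>]
      sset_closed[OF X_sset, of m n' \<alpha>] by auto
qed

definition gm :: "nat \<Rightarrow> nat \<Rightarrow> nat list set set \<Rightarrow> nat list" where
  "gm k m C = collapse_map k m (SOME x. x \<in> C)"

lemma gm_class: assumes x: "x \<in> sx (collapse n k) m"
  shows "gm k m (Kr n k m `` {x}) = collapse_map k m x"
proof -
  have "x \<in> Kr n k m `` {x}" using x by (simp add: Kr_def)
  hence "(SOME y. y \<in> Kr n k m `` {x}) \<in> Kr n k m `` {x}" by (rule someI)
  then obtain y where y: "y = (SOME y. y \<in> Kr n k m `` {x})" "(x,y) \<in> Kr n k m" by auto
  have "gm k m (Kr n k m `` {x}) = collapse_map k m y" unfolding gm_def y(1) ..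
  thus ?thesis using y(2) by (simp add: Kr_def)
qed

abbreviation "YK n k \<equiv> quot (collapse n k) (Kr n k)"

lemma Y_elem: "C \<in> sx (YK n k) m \<Longrightarrow> \<exists>x \<in> sx (collapse n k) m. C = Kr n k m `` {x}"
  by (auto simp: quot_sx elim!: quotientE)

lemma Y_sset: "is_sset (YK n k)" by (rule quot_sset[OF X_sset compat_K])

lemma gm_sop: assumes C: "C \<in> sx (YK n k) p" and a: "ordop m p \<alpha>"
  shows "gm k m (sop (YK n k) p \<alpha> C) = map (nth (gm k p C)) \<alpha>"
proof -
  obtain x where x: "x \<in> sx (collapse n k) p" "C = Kr n k p `` {x}" using Y_elem[OF C] by blast
  show ?thesis using quot_class_sop[OF compat_K a x(1)] x gm_class cm_sop[OF x(1) a]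
      sset_closed[OF X_sset a x(1)] by simp
qed

lemma gm_inj: assumes C: "C \<in> sx (YK n k) p" and D: "D \<in> sx (YK n k) p" and e: "gm k p C = gm k p D"
  shows "C = D"
proof -
  obtain x where x: "x \<in> sx (collapse n k) p" "C = Kr n k p `` {x}" using Y_elem[OF C] by blast
  obtain y where y: "y \<in> sx (collapse n k) p" "D = Kr n k p `` {y}" using Y_elem[OF D] by blast
  have "(x,y) \<in> Kr n k p" using x y e gm_class by (simp add: Kr_def)
  thus ?thesis using x y compat_K by (metis compat_rel_def equiv_class_eq)
qed

lemma gm_surj: assumes "k \<le> n" "ordop m (n - k) \<delta>"
  shows "\<exists>C \<in> sx (YK n k) m. gm k m C = \<delta>"
  using cm_surj[OF assms] gm_class by (metis quot_sx quotientI)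

lemma inj_map_nth: assumes "distinct xs" "\<forall>i\<in>set a. i < length xs" "\<forall>i\<in>set b. i < length xs"
  "map (nth xs) a = map (nth xs) b" shows "a = b"
proof -
  have "inj_on (nth xs) (set a \<union> set b)"
    using assms(1-3) by (intro inj_on_subset[OF inj_on_nth[of xs "{..<length xs}"]]) auto
  thus ?thesis using assms(4) inj_on_map_eq_map by blast
qed

lemma Y_nonsingular: assumes "k \<le> n" shows "nonsingular (YK n k)"
  unfolding nonsingular_def
proof (intro allI impI)
  fix p w m assume h: "w \<in> sx (YK n k) p \<and> \<not> degenerate (YK n k) p w"
  hence w: "w \<in> sx (YK n k) p" and nd: "\<not> degenerate (YK n k) p w" by auto
  obtain x where x: "x \<in> sx (collapse n k) p" "w = Kr n k p `` {x}" using Y_elem[OF w] by blast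
  have og: "ordop p (n - k) (gm k p w)" using x gm_class cm_ordop by metis
  have dist: "distinct (gm k p w)"
  proof (rule ccontr)
    assume "\<not> distinct (gm k p w)"
    from nondistinct_degenerate[OF og this] obtain q \<sigma> \<delta> where
      d: "q < p" "ordop p q \<sigma>" "set \<sigma> = {0..q}" "ordop q (n - k) \<delta>" "gm k p w = map (nth \<delta>) \<sigma>"
      unfolding degenerate_def by (auto simp: stdsimp_def)
    obtain w' where w': "w' \<in> sx (YK n k) q" "gm k q w' = \<delta>" using gm_surj[OF assms d(4)] by blast
    have s: "sop (YK n k) q \<sigma> w' \<in> sx (YK n k) p" using sset_closed[OF Y_sset d(2) w'(1)] .
    have "gm k p (sop (YK n k) q \<sigma> w') = gm k p w" using gm_sop[OF w'(1) d(2)] w' d by simp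
    hence "w = sop (YK n k) q \<sigma> w'" using gm_inj[OF w s] by simp
    hence "degenerate (YK n k) p w" unfolding degenerate_def using d w' by blast
    thus False using nd by blast
  qed
  show "inj_on (\<lambda>\<alpha>. sop (YK n k) p \<alpha> w) {\<alpha>. ordop m p \<alpha>}"
  proof (rule inj_onI)
    fix a b assume a: "a \<in> {\<alpha>. ordop m p \<alpha>}" and b: "b \<in> {\<alpha>. ordop m p \<alpha>}"
      and e: "sop (YK n k) p a w = sop (YK n k) p b w"
    have "map (nth (gm k p w)) a = map (nth (gm k p w)) b"
      using gm_sop[OF w, of m a] gm_sop[OF w, of m b] a b e by simp
    moreover have "length (gm k p w) = Suc p" using og by (simp add: ordop_def)
    ultimately show "a = b" using inj_map_nth[OF dist] a b by (simp add: ordop_def) (metis le_imp_less_Suc)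
  qed
qed

lemma admissible_K: "k \<le> n \<Longrightarrow> admissible (collapse n k) (Kr n k)"
  unfolding admissible_def using compat_K Y_nonsingular by blast




lemma set_comp_surj:
  assumes "ordop n m \<sigma>1" "set \<sigma>1 = {0..m}" "ordop m p \<sigma>2"
  shows "set (map (nth \<sigma>2) \<sigma>1) = set \<sigma>2"
proof -
  have "length \<sigma>2 = Suc m" using assms by (simp add: ordop_def)
  hence "set \<sigma>2 = nth \<sigma>2 ` {0..m}" by (auto simp: set_conv_nth)
  thus ?thesis using assms(2) by simp
qed

lemma EZ:
  assumes Y: "is_sset Y"
  shows "y \<in> sx Y n \<Longrightarrow> \<exists>p \<sigma> z. ordop n p \<sigma> \<and> set \<sigma> = {0..p} \<and> z \<in> sx Y p \<and>
            \<not> degenerate Y p z \<and> y = sop Y p \<sigma> z"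
proof (induction n arbitrary: y rule: less_induct)
  case (less n)
  show ?case
  proof (cases "degenerate Y n y")
    case False
    thus ?thesis using less.prems sset_id[OF Y less.prems] ordop_id
      by (intro exI[of _ n] exI[of _ "[0..<Suc n]"] exI[of _ y]) (auto simp del: upt_Suc)
  next
    case True
    then obtain m \<sigma>1 w where d: "m < n" "ordop n m \<sigma>1" "set \<sigma>1 = {0..m}" "w \<in> sx Y m" "y = sop Y m \<sigma>1 w"
      unfolding degenerate_def by blast
    obtain p \<sigma>2 z where e: "ordop m p \<sigma>2" "set \<sigma>2 = {0..p}" "z \<in> sx Y p" "\<not> degenerate Y p z" "w = sop Y p \<sigma>2 z"
      using less.IH[OF d(1) d(4)] by blast
    have "y = sop Y p (map (nth \<sigma>2) \<sigma>1) z" using d(5) e(5) sset_comp[OF Y d(2) e(1) e(3)] by simp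
    moreover have "ordop n p (map (nth \<sigma>2) \<sigma>1)" using ordop_comp[OF d(2) e(1)] .
    moreover have "set (map (nth \<sigma>2) \<sigma>1) = {0..p}" using set_comp_surj[OF d(2) d(3) e(1)] e(2) by simp
    ultimately show ?thesis using e by blast
  qed
qed

lemma sig_eq:
  assumes s: "\<forall>i\<le>k. \<sigma>!i = \<sigma>!0" and l: "length \<beta> = length \<beta>'"
    and e: "map (\<lambda>i. i - k) \<beta> = map (\<lambda>i. i - (k::nat)) \<beta>'"
  shows "map (nth \<sigma>) \<beta> = map (nth \<sigma>) \<beta>'"
proof (rule nth_equalityI)
  show "length (map ((!) \<sigma>) \<beta>) = length (map ((!) \<sigma>) \<beta>')" using l by simp
  fix j assume j: "j < length (map ((!) \<sigma>) \<beta>)"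
  have "map (\<lambda>i. i - k) \<beta> ! j = map (\<lambda>i. i - k) \<beta>' ! j" using e by simp
  hence "\<beta>!j - k = \<beta>'!j - k" using j l by simp
  hence "\<sigma>!(\<beta>!j) = \<sigma>!(\<beta>'!j)"
  proof (cases "\<beta>!j \<le> k")
    case True
    assume d: "\<beta>!j - k = \<beta>'!j - k"
    hence "\<beta>'!j \<le> k" using True by simp
    thus ?thesis using True s[rule_format, of "\<beta>!j"] s[rule_format, of "\<beta>'!j"] by (simp only:)
  next
    case False
    assume d: "\<beta>!j - k = \<beta>'!j - k"
    hence "\<beta>!j = \<beta>'!j" using False by simp
    thus ?thesis by simp
  qed
  thus "map ((!) \<sigma>) \<beta> ! j = map ((!) \<sigma>) \<beta>' ! j" using j l by simp
qed

lemma map_id_upt: "ordop m n \<beta> \<Longrightarrow> map (nth [0..<Suc n]) \<beta> = \<beta>"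
  by (auto simp: ordop_def intro!: map_idI simp del: upt_Suc)

lemma K_sub:
  assumes k: "0 < k" "k < n" and adm: "admissible (collapse n k) R'" and xx: "(x,x') \<in> Kr n k m"
  shows "(x,x') \<in> R' m"
proof -
  let ?X = "collapse n k" and ?Y = "quot (collapse n k) R'"
  let ?c = "\<lambda>m \<beta>. collapse_rel n k m `` {\<beta>}"
  have cR: "compat_rel ?X R'" and ns: "nonsingular ?Y" using adm by (auto simp: admissible_def)
  have sY: "is_sset ?Y" by (rule quot_sset[OF X_sset cR])
  define \<iota> where "\<iota> = ?c n [0..<Suc n]"
  have \<iota>: "\<iota> \<in> sx ?X n" unfolding \<iota>_def using X_elemI[OF ordop_id] .
  define y where "y = R' n `` {\<iota>}"
  have yY: "y \<in> sx ?Y n" unfolding y_def quot_sx using \<iota> by (rule quotientI)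
  have h: "R' m `` {?c m \<beta>} = sop ?Y n \<beta> y" if b: "ordop m n \<beta>" for m \<beta>
  proof -
    have "sop ?X n \<beta> \<iota> = ?c m \<beta>" unfolding \<iota>_def using X_sop_q[OF b ordop_id] map_id_upt[OF b] by simp
    thus ?thesis unfolding y_def using quot_class_sop[OF cR b \<iota>] by simp
  qed
  obtain p \<sigma> z where e: "ordop n p \<sigma>" "set \<sigma> = {0..p}" "z \<in> sx ?Y p" "\<not> degenerate ?Y p z" "y = sop ?Y p \<sigma> z"
    using EZ[OF sY yY] by blast
  have inj: "inj_on (\<lambda>\<alpha>. sop ?Y p \<alpha> z) {\<alpha>. ordop 1 p \<alpha>}" using ns e(3,4) unfolding nonsingular_def by blast
  have ls: "length \<sigma> = Suc n" using e(1) by (simp add: ordop_def)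
  have sig: "\<forall>i\<le>k. \<sigma>!i = \<sigma>!0"
  proof (intro allI impI)
    fix i assume i: "i \<le> k"
    have o1: "ordop 1 n [0,i]" "ordop 1 n [0,0]" using i k by (auto simp: ordop_def)
    have "?c 1 [0,i] = ?c 1 [0,0]" using i k
      by (intro equiv_class_eq[OF compat_std[unfolded compat_rel_def, THEN conjunct1, rule_format]])
         (auto simp: collapse_rel_iff ordop_def)
    hence "sop ?Y n [0,i] y = sop ?Y n [0,0] y" using h[OF o1(1)] h[OF o1(2)] by simp
    hence "sop ?Y p (map (nth \<sigma>) [0,i]) z = sop ?Y p (map (nth \<sigma>) [0,0]) z"
      using e(5) sset_comp[OF sY o1(1) e(1) e(3)] sset_comp[OF sY o1(2) e(1) e(3)] by simp
    moreover have "ordop 1 p (map (nth \<sigma>) [0,i])" "ordop 1 p (map (nth \<sigma>) [0,0])"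
      using ordop_comp[OF o1(1) e(1)] ordop_comp[OF o1(2) e(1)] .
    ultimately have "map (nth \<sigma>) [0,i] = map (nth \<sigma>) [0,0]" using inj_onD[OF inj] by blast
    thus "\<sigma>!i = \<sigma>!0" by simp
  qed
  have xX: "x \<in> sx ?X m" "x' \<in> sx ?X m" and cm: "collapse_map k m x = collapse_map k m x'"
    using xx by (auto simp: Kr_def)
  obtain \<beta> where b: "ordop m n \<beta>" "x = ?c m \<beta>" using X_elem[OF xX(1)] by blast
  obtain \<beta>' where b': "ordop m n \<beta>'" "x' = ?c m \<beta>'" using X_elem[OF xX(2)] by blast
  have "map (nth \<sigma>) \<beta> = map (nth \<sigma>) \<beta>'"
    using sig_eq[OF sig] b b' cm cm_q[OF b(1)] cm_q[OF b'(1)] by (simp add: ordop_def)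
  hence "sop ?Y n \<beta> y = sop ?Y n \<beta>' y"
    using e(5) sset_comp[OF sY b(1) e(1) e(3)] sset_comp[OF sY b'(1) e(1) e(3)] by simp
  hence "R' m `` {x} = R' m `` {x'}" using h[OF b(1)] h[OF b'(1)] b b' by simp
  moreover have "equiv (sx ?X m) (R' m)" using cR by (simp add: compat_rel_def)
  ultimately show ?thesis using eq_equiv_class_iff[of "sx ?X m" "R' m" x x'] xX by simp
qed




lemma eta_eq:
  assumes k: "0 < k" "k < n" and x: "x \<in> sx (collapse n k) m" and y: "y \<in> sx (collapse n k) m"
  shows "eta (collapse n k) m x = eta (collapse n k) m y \<longleftrightarrow> collapse_map k m x = collapse_map k m y"
proof
  assume e: "eta (collapse n k) m x = eta (collapse n k) m y"
  have adm: "admissible (collapse n k) (Kr n k)" using admissible_K k by simp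
  have "Kr n k m `` {x} = Kr n k m `` {y}" using fun_cong[OF e, of "Kr n k"] adm by (simp add: eta_def)
  moreover have "equiv (sx (collapse n k) m) (Kr n k m)" using compat_K by (simp add: compat_rel_def)
  ultimately have "(x,y) \<in> Kr n k m" using eq_equiv_class_iff x y by metis
  thus "collapse_map k m x = collapse_map k m y" by (simp add: Kr_def)
next
  assume c: "collapse_map k m x = collapse_map k m y"
  hence xy: "(x,y) \<in> Kr n k m" using x y by (simp add: Kr_def)
  show "eta (collapse n k) m x = eta (collapse n k) m y"
  proof (rule ext)
    fix R show "eta (collapse n k) m x R = eta (collapse n k) m y R"
    proof (cases "admissible (collapse n k) R")
      case True
      hence "(x,y) \<in> R m" using K_sub[OF k True xy] by simp
      moreover have "equiv (sx (collapse n k) m) (R m)" using True by (simp add: admissible_def compat_rel_def)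
      ultimately show ?thesis using True by (simp add: eta_def equiv_class_eq)
    qed (simp add: eta_def)
  qed
qed

lemma desing_sop:
  assumes x: "x \<in> sx X n" and a: "ordop m n \<alpha>"
  shows "sop (desing X) n \<alpha> (eta X n x) = eta X m (sop X n \<alpha> x)"
proof (rule ext)
  fix R show "sop (desing X) n \<alpha> (eta X n x) R = eta X m (sop X n \<alpha> x) R"
  proof (cases "admissible X R")
    case True
    hence cR: "compat_rel X R" by (simp add: admissible_def)
    have "sop (quot X R) n \<alpha> (R n `` {x}) = R m `` {sop X n \<alpha> x}" by (rule quot_class_sop[OF cR a x])
    thus ?thesis using True by (simp add: desing_def eta_def quot_def)
  qed (simp add: desing_def eta_def)
qed

theorem mainTheorem8:
  fixes n k :: nat
  assumes "0 < k" and "k < n"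
  shows "\<exists>\<phi>. sset_iso (desing (collapse n k)) (stdsimp (n - k)) \<phi> \<and>
             (\<forall>m x. x \<in> sx (collapse n k) m \<longrightarrow>
                 \<phi> m (eta (collapse n k) m x) = collapse_map k m x)"
proof -
  let ?X = "collapse n k"
  define \<phi> where "\<phi> = (\<lambda>m z. collapse_map k m (SOME x. x \<in> sx ?X m \<and> eta ?X m x = z))"
  have pe: "\<phi> m (eta ?X m x) = collapse_map k m x" if x: "x \<in> sx ?X m" for m x
  proof -
    have "\<exists>x'. x' \<in> sx ?X m \<and> eta ?X m x' = eta ?X m x" using x by blast
    hence "(SOME x'. x' \<in> sx ?X m \<and> eta ?X m x' = eta ?X m x) \<in> sx ?X m \<and>
           eta ?X m (SOME x'. x' \<in> sx ?X m \<and> eta ?X m x' = eta ?X m x) = eta ?X m x" by (rule someI_ex)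
    then obtain x' where x': "x' = (SOME x'. x' \<in> sx ?X m \<and> eta ?X m x' = eta ?X m x)"
      "x' \<in> sx ?X m" "eta ?X m x' = eta ?X m x" by blast
    have "collapse_map k m x' = collapse_map k m x" using eta_eq[OF assms x'(2) x] x'(3) by blast
    thus ?thesis unfolding \<phi>_def x'(1)[symmetric] .
  qed
  have dsx: "sx (desing ?X) m = eta ?X m ` sx ?X m" for m by (simp add: desing_def)
  have smap: "sset_map (desing ?X) (stdsimp (n - k)) \<phi>"
    unfolding sset_map_def
  proof (intro conjI allI impI)
    fix m z assume "z \<in> sx (desing ?X) m"
    then obtain x where x: "x \<in> sx ?X m" "z = eta ?X m x" using dsx by blast
    show "\<phi> m z \<in> sx (stdsimp (n - k)) m" using x pe[OF x(1)] cm_ordop[OF x(1)] by (simp add: stdsimp_def)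
  next
    fix m n' \<alpha> z assume h: "ordop m n' \<alpha> \<and> z \<in> sx (desing ?X) n'"
    then obtain x where x: "x \<in> sx ?X n'" "z = eta ?X n' x" using dsx by blast
    have a: "ordop m n' \<alpha>" using h by simp
    have s: "sop ?X n' \<alpha> x \<in> sx ?X m" using sset_closed[OF X_sset a x(1)] .
    show "\<phi> m (sop (desing ?X) n' \<alpha> z) = sop (stdsimp (n - k)) n' \<alpha> (\<phi> n' z)"
      using x desing_sop[OF x(1) a] pe[OF s] pe[OF x(1)] cm_sop[OF x(1) a] by (simp add: stdsimp_def)
  qed
  have bij: "bij_betw (\<phi> m) (sx (desing ?X) m) (sx (stdsimp (n - k)) m)" for m
    unfolding bij_betw_def
  proof
    show "inj_on (\<phi> m) (sx (desing ?X) m)"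
    proof (rule inj_onI)
      fix z z' assume "z \<in> sx (desing ?X) m" "z' \<in> sx (desing ?X) m" and e: "\<phi> m z = \<phi> m z'"
      then obtain x x' where x: "x \<in> sx ?X m" "z = eta ?X m x" "x' \<in> sx ?X m" "z' = eta ?X m x'"
        using dsx by blast
      have "collapse_map k m x = collapse_map k m x'" using e pe[OF x(1)] pe[OF x(3)] x(2,4) by simp
      thus "z = z'" using eta_eq[OF assms x(1) x(3)] x(2,4) by blast
    qed
    show "\<phi> m ` sx (desing ?X) m = sx (stdsimp (n - k)) m"
    proof
      show "\<phi> m ` sx (desing ?X) m \<subseteq> sx (stdsimp (n - k)) m"
        using smap unfolding sset_map_def by blast
      show "sx (stdsimp (n - k)) m \<subseteq> \<phi> m ` sx (desing ?X) m"
      proof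
        fix \<delta> assume "\<delta> \<in> sx (stdsimp (n - k)) m"
        hence "ordop m (n - k) \<delta>" by (simp add: stdsimp_def)
        then obtain x where x: "x \<in> sx ?X m" "collapse_map k m x = \<delta>" using cm_surj[of k n m \<delta>] assms by auto
        have "eta ?X m x \<in> sx (desing ?X) m" using dsx x(1) by blast
        moreover have "\<phi> m (eta ?X m x) = \<delta>" using pe[OF x(1)] x(2) by simp
        ultimately show "\<delta> \<in> \<phi> m ` sx (desing ?X) m" by (metis imageI)
      qed
    qed
  qed
  show ?thesis using smap bij pe unfolding sset_iso_def by blast
qed


end
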